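(* Let $\lambda$ be a nonzero cardinal, let $X$ and $Y$ be sets, and let $\mathcal{T} = \langle T; \ell^{\mathcal{T}}\rangle$ and $\mathcal{U} = \langle U; \ell^{\mathcal{U}}\rangle$ be $\lambda$-labeled trees with $T \subset X^{<\omega}$ and $U \subset Y^{<\omega}$. Then there is no homomorphism from $\mathcal{T}$ to $\mathcal{U}$ if and only if player I has a winning strategy in the game $G(\mathcal{T},\mathcal{U})$.
   Context: For a set $X$, $X^{<\omega}$ is the set of finite sequences from $X$. A tree on $X$ is a nonempty subset of $X^{<\omega}$ closed under initial segments; its root is the empty sequence $\langle\rangle$. A $\lambda$-labeled tree is a structure $\mathcal{T} = \langle T; \ell^{\mathcal{T}}\rangle$ where $T$ is a tree on some set and $\ell^{\mathcal{T}} : T \to \lambda$. A homomorphism of trees is a function from one tree to another preserving lengths of sequences and the initial-segment relation; a homomorphism of $\lambda$-labeled trees $\mathcal{T}\to\mathcal{U}$ is a tree homomorphism $h : T \to U$ with $\ell^{\mathcal{U}}\circ h = \ell^{\mathcal{T}}$. The game $G(\mathcal{T},\mathcal{U})$: players I and II alternately play $x_0, y_0, x_1, y_1, \ldots$ with $x_n \in X$, $y_n \in Y$, for $\omega$ rounds, subject to the rules, for all $n<\omega$: (I) $\langle x_0,\ldots,x_n\rangle \in T$; (II) $\langle y_0,\ldots,y_n\rangle \in U$; (II) $\ell^{\mathcal{U}}(\langle y_0,\ldots,y_n\rangle) = \ell^{\mathcal{T}}(\langle x_0,\ldots,x_n\rangle)$. The first player to break a rule loses; if both follow the rules forever, player II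 wins. If the roots of $\mathcal{T}$ and $\mathcal{U}$ have different labels, player II loses immediately. A winning strategy for player I is a function $\Sigma : Y^{<\omega} \to X$ such that for every sequence $\langle y_n : n<\omega\rangle$ of moves of player II, if $x_n = \Sigma(\langle y_0,\ldots,y_{n-1}\rangle)$ for all $n<\omega$, then player I wins. *)

theory Defs
  imports Main "HOL-Library.Sublist"
begin

text \<open>Finite sequences are lists. The sets X, Y are the types 'x, 'y; the label set
  (the nonzero cardinal lambda) is the (nonempty) type 'l.\<close>

definition is_tree :: "'x list set \<Rightarrow> bool" where
  "is_tree T \<longleftrightarrow> T \<noteq> {} \<and> (\<forall>t\<in>T. \<forall>s. prefix s t \<longrightarrow> s \<in> T)"

definition labeled_tree_hom ::
  "'x list set \<Rightarrow> ('x list \<Rightarrow> 'l) \<Rightarrow> 'y list set \<Rightarrow> ('y list \<Rightarrow> 'l) \<Rightarrow> ('x list \<Rightarrow> 'y list) \<Rightarrow> bool" where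
  "labeled_tree_hom T lT U lU h \<longleftrightarrow>
     (\<forall>s\<in>T. h s \<in> U) \<and>
     (\<forall>s\<in>T. length (h s) = length s) \<and>
     (\<forall>s\<in>T. \<forall>t\<in>T. prefix s t \<longrightarrow> prefix (h s) (h t)) \<and>
     (\<forall>s\<in>T. lU (h s) = lT s)"

text \<open>Player I wins the play x_0, y_0, x_1, y_1, ... of G(T,U): either the roots have
  different labels, or at some round n player I has obeyed his rule in rounds 0..n and
  player II has broken one of her rules at round n (taking the least such n, II obeyed
  her rules in all earlier rounds, so II is the first to break a rule).\<close>
definition player_I_wins_play ::
  "'x list set \<Rightarrow> ('x list \<Rightarrow> 'l) \<Rightarrow> 'y list set \<Rightarrow> ('y list \<Rightarrow> 'l) \<Rightarrow> (nat \<Rightarrow> 'x) \<Rightarrow> (nat \<Rightarrow> 'y) \<Rightarrow> bool" where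
  "player_I_wins_play T lT U lU xs ys \<longleftrightarrow>
     lU [] \<noteq> lT [] \<or>
     (\<exists>n. (\<forall>m\<le>n. map xs [0..<Suc m] \<in> T) \<and>
          \<not> (map ys [0..<Suc n] \<in> U \<and> lU (map ys [0..<Suc n]) = lT (map xs [0..<Suc n])))"

definition winning_strategy_I ::
  "'x list set \<Rightarrow> ('x list \<Rightarrow> 'l) \<Rightarrow> 'y list set \<Rightarrow> ('y list \<Rightarrow> 'l) \<Rightarrow> ('y list \<Rightarrow> 'x) \<Rightarrow> bool" where
  "winning_strategy_I T lT U lU \<Sigma> \<longleftrightarrow>
     (\<forall>ys :: nat \<Rightarrow> 'y. player_I_wins_play T lT U lU (\<lambda>n. \<Sigma> (map ys [0..<n])) ys)"

end

theory Submission
  imports Defs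
begin

inductive lose :: "'x list set \<Rightarrow> ('x list \<Rightarrow> 'l) \<Rightarrow> 'y list set \<Rightarrow> ('y list \<Rightarrow> 'l) \<Rightarrow> 'x list \<Rightarrow> 'y list \<Rightarrow> bool"
  for T lT U lU where
  bad: "\<not> (t \<in> U \<and> lU t = lT s) \<Longrightarrow> lose T lT U lU s t"
| step: "s @ [x] \<in> T \<Longrightarrow> (\<forall>y. lose T lT U lU (s @ [x]) (t @ [y])) \<Longrightarrow> lose T lT U lU s t"

definition wins_from :: "'x list set \<Rightarrow> ('x list \<Rightarrow> 'l) \<Rightarrow> 'y list set \<Rightarrow> ('y list \<Rightarrow> 'l) \<Rightarrow> 'x list \<Rightarrow> 'y list \<Rightarrow> ('y list \<Rightarrow> 'x) \<Rightarrow> bool" where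
  "wins_from T lT U lU s t \<sigma> \<longleftrightarrow>
    (\<forall>ys :: nat \<Rightarrow> 'y.
      \<not> (t \<in> U \<and> lU t = lT s) \<or>
      (\<exists>n. (\<forall>m\<le>n. s @ map (\<lambda>n. \<sigma> (map ys [0..<n])) [0..<Suc m] \<in> T) \<and>
         \<not> (t @ map ys [0..<Suc n] \<in> U \<and>
             lU (t @ map ys [0..<Suc n]) = lT (s @ map (\<lambda>n. \<sigma> (map ys [0..<n])) [0..<Suc n]))))"

lemma lose_wins:
  fixes s :: "'x list" and t :: "'y list"
  assumes "lose T lT U lU s t"
  shows "\<exists>\<sigma>. wins_from T lT U lU s t \<sigma>"
  using assms
proof (induction rule: lose.induct)
  case (bad t s)
  then show ?case by (auto simp: wins_from_def)
next
  case (step s x t)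
  show ?case
  proof (cases "t \<in> U \<and> lU t = lT s")
    case False
    then show ?thesis by (auto simp: wins_from_def)
  next
    case True
    have "\<forall>y. \<exists>\<sigma>. wins_from T lT U lU (s @ [x]) (t @ [y]) \<sigma>" using step.IH by blast
    then obtain S where S: "\<And>y. wins_from T lT U lU (s @ [x]) (t @ [y]) (S y)" by metis
    define \<sigma> where "\<sigma> r = (case r of [] \<Rightarrow> x | y # r' \<Rightarrow> S y r')" for r
    have "wins_from T lT U lU s t \<sigma>"
      unfolding wins_from_def
    proof (intro allI disjI2)
      fix ys :: "nat \<Rightarrow> 'y"
      define ys' where "ys' = (\<lambda>n. ys (Suc n))"
      define xs where "xs = (\<lambda>n. \<sigma> (map ys [0..<n]))"
      define xs' where "xs' = (\<lambda>n. S (ys 0) (map ys' [0..<n]))"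
      have x0: "xs 0 = x" by (simp add: xs_def \<sigma>_def)
      have xsS: "xs (Suc n) = xs' n" for n
        by (simp add: xs_def xs'_def \<sigma>_def map_upt_Suc ys'_def del: upt_Suc)
      have mx: "map xs [0..<Suc (Suc m)] = x # map xs' [0..<Suc m]" for m
        by (simp only: map_upt_Suc[of xs] x0 xsS)
      have my: "map ys [0..<Suc (Suc m)] = ys 0 # map ys' [0..<Suc m]" for m
        by (simp only: map_upt_Suc[of ys] ys'_def)
      from S[of "ys 0", unfolded wins_from_def, rule_format, of ys']
      have W: "\<not> (t @ [ys 0] \<in> U \<and> lU (t @ [ys 0]) = lT (s @ [x])) \<or>
        (\<exists>n. (\<forall>m\<le>n. (s @ [x]) @ map xs' [0..<Suc m] \<in> T) \<and>
         \<not> ((t @ [ys 0]) @ map ys' [0..<Suc n] \<in> U \<and>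
             lU ((t @ [ys 0]) @ map ys' [0..<Suc n]) = lT ((s @ [x]) @ map xs' [0..<Suc n])))"
        unfolding xs'_def by simp
      show "\<exists>n. (\<forall>m\<le>n. s @ map xs [0..<Suc m] \<in> T) \<and>
         \<not> (t @ map ys [0..<Suc n] \<in> U \<and> lU (t @ map ys [0..<Suc n]) = lT (s @ map xs [0..<Suc n]))"
        unfolding xs_def[symmetric]
      proof (cases "t @ [ys 0] \<in> U \<and> lU (t @ [ys 0]) = lT (s @ [x])")
        case False
        then show ?thesis using step.hyps(1) x0
          by (intro exI[of _ 0]) simp
      next
        case True
        with W obtain n where n1: "\<forall>m\<le>n. (s @ [x]) @ map xs' [0..<Suc m] \<in> T"
          and n2: "\<not> ((t @ [ys 0]) @ map ys' [0..<Suc n] \<in> U \<and>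
             lU ((t @ [ys 0]) @ map ys' [0..<Suc n]) = lT ((s @ [x]) @ map xs' [0..<Suc n]))"
          by blast
        show ?thesis
        proof (intro exI[of _ "Suc n"] conjI allI impI)
          fix m assume "m \<le> Suc n"
          then show "s @ map xs [0..<Suc m] \<in> T"
          proof (cases m)
            case 0 then show ?thesis using step.hyps(1) x0 by simp
          next
            case (Suc m')
            then show ?thesis using n1 \<open>m \<le> Suc n\<close> mx[of m'] by (simp del: upt_Suc)
          qed
        next
          show "\<not> (t @ map ys [0..<Suc (Suc n)] \<in> U \<and>
              lU (t @ map ys [0..<Suc (Suc n)]) = lT (s @ map xs [0..<Suc (Suc n)]))"
            using n2 mx[of n] my[of n] by (simp del: upt_Suc)
        qed
      qed
    qed
    then show ?thesis by blast
  qed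
qed

fun gh :: "'x list set \<Rightarrow> ('x list \<Rightarrow> 'l) \<Rightarrow> 'y list set \<Rightarrow> ('y list \<Rightarrow> 'l) \<Rightarrow> 'x list \<Rightarrow> 'y list" where
  "gh T lT U lU [] = []"
| "gh T lT U lU (x # r) = gh T lT U lU r @ [SOME y. \<not> lose T lT U lU (rev r @ [x]) (gh T lT U lU r @ [y])]"

lemma hom_exists:
  fixes T :: "'x list set" and U :: "'y list set"
  assumes tr: "is_tree T" and nl: "\<not> lose T lT U lU [] []"
  shows "\<exists>h. labeled_tree_hom T lT U lU h"
proof -
  define h where "h s = gh T lT U lU (rev s)" for s
  have hsnoc: "h (s @ [x]) = h s @ [SOME y. \<not> lose T lT U lU (s @ [x]) (h s @ [y])]" for s x
    by (simp add: h_def)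
  have pc: "s \<in> T" if "s @ u \<in> T" for s u
  proof -
    have "prefix s (s @ u)" by simp
    then show ?thesis using tr that unfolding is_tree_def by blast
  qed
  have inv: "s \<in> T \<Longrightarrow> \<not> lose T lT U lU s (h s) \<and> length (h s) = length s" for s
  proof (induction s rule: rev_induct)
    case Nil then show ?case using nl by (simp add: h_def)
  next
    case (snoc x s)
    have "s \<in> T" using pc snoc.prems by blast
    then have s: "\<not> lose T lT U lU s (h s)" "length (h s) = length s" using snoc.IH by auto
    have "\<exists>y. \<not> lose T lT U lU (s @ [x]) (h s @ [y])"
    proof (rule ccontr)
      assume "\<nexists>y. \<not> lose T lT U lU (s @ [x]) (h s @ [y])"
      then have "lose T lT U lU s (h s)" using lose.step[of s x T lT U lU "h s"] snoc.prems by blast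
      then show False using s(1) by blast
    qed
    then have "\<not> lose T lT U lU (s @ [x]) (h (s @ [x]))"
      unfolding hsnoc by (rule someI_ex)
    then show ?case using s(2) by (simp add: hsnoc)
  qed
  have pre: "prefix (h s) (h (s @ u))" for s u
  proof (induction u rule: rev_induct)
    case Nil then show ?case by simp
  next
    case (snoc x u)
    then show ?case using hsnoc[of "s @ u" x] by (simp add: prefix_def) (metis append.assoc)
  qed
  have "labeled_tree_hom T lT U lU h"
    unfolding labeled_tree_hom_def
  proof (intro conjI ballI impI)
    fix s assume "s \<in> T"
    then have "\<not> lose T lT U lU s (h s)" using inv by blast
    then have "h s \<in> U \<and> lU (h s) = lT s" using lose.bad by blast
    then show "h s \<in> U" "lU (h s) = lT s" by auto
    show "length (h s) = length s" using inv \<open>s \<in> T\<close> by blast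
  next
    fix s t :: "'x list" assume "prefix s t"
    then show "prefix (h s) (h t)" using pre by (auto simp: prefix_def)
  qed
  then show ?thesis by blast
qed

fun Yf :: "('y list \<Rightarrow> 'x) \<Rightarrow> ('x list \<Rightarrow> 'y list) \<Rightarrow> nat \<Rightarrow> 'y list" where
  "Yf \<Sigma> h 0 = []"
| "Yf \<Sigma> h (Suc n) = Yf \<Sigma> h n @ [h (map (\<lambda>k. \<Sigma> (take k (Yf \<Sigma> h n))) [0..<Suc n]) ! n]"

lemma Yf_len: "length (Yf \<Sigma> h n) = n"
  by (induction n) auto

lemma Yf_take: "m \<le> n \<Longrightarrow> take m (Yf \<Sigma> h n) = Yf \<Sigma> h m"
proof (induction n)
  case 0 then show ?case by simp
next
  case (Suc n)
  then show ?case
    by (cases "m = Suc n") (auto simp: Yf_len take_append)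
qed

lemma no_hom:
  fixes T :: "'x list set" and U :: "'y list set" and h :: "'x list \<Rightarrow> 'y list"
    and \<Sigma> :: "'y list \<Rightarrow> 'x"
  assumes tr: "is_tree T" and hom: "labeled_tree_hom T lT U lU h"
  shows "\<not> winning_strategy_I T lT U lU \<Sigma>"
proof
  assume ws: "winning_strategy_I T lT U lU \<Sigma>"
  define Y where "Y = Yf \<Sigma> h"
  define ys where "ys n = Y (Suc n) ! n" for n
  have my: "map ys [0..<n] = Y n" for n
  proof (induction n)
    case 0 then show ?case by (simp add: Y_def)
  next
    case (Suc n)
    then show ?case by (simp add: ys_def Y_def nth_append Yf_len)
  qed
  define xs where "xs n = \<Sigma> (map ys [0..<n])" for n
  define A where "A n = map xs [0..<Suc n]" for n
  have YS: "Y (Suc n) = Y n @ [h (A n) ! n]" for n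
  proof -
    have "map (\<lambda>k. \<Sigma> (take k (Y n))) [0..<Suc n] = A n"
      unfolding A_def xs_def my by (intro map_cong) (auto simp: Y_def Yf_take)
    then show ?thesis by (simp add: Y_def)
  qed
  have AS: "A (Suc n) = A n @ [xs (Suc n)]" for n by (simp add: A_def)
  have hl: "s \<in> T \<Longrightarrow> length (h s) = length s" for s using hom by (simp add: labeled_tree_hom_def)
  have hp: "s \<in> T \<Longrightarrow> t \<in> T \<Longrightarrow> prefix s t \<Longrightarrow> prefix (h s) (h t)" for s t
    using hom by (simp add: labeled_tree_hom_def)
  have key: "(\<forall>m\<le>n. A m \<in> T) \<Longrightarrow> Y (Suc n) = h (A n)" for n
  proof (induction n)
    case 0
    have "length (h (A 0)) = 1" using 0 hl by (simp add: A_def)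
    then show ?case using YS[of 0] by (simp add: Y_def) (metis One_nat_def length_0_conv length_Suc_conv nth_Cons_0)
  next
    case (Suc n)
    then have IH: "Y (Suc n) = h (A n)" by simp
    have T1: "A n \<in> T" "A (Suc n) \<in> T" using Suc.prems by auto
    have "prefix (h (A n)) (h (A (Suc n)))" using hp[OF T1] AS by simp
    then obtain zs where zs: "h (A (Suc n)) = h (A n) @ zs" by (auto simp: prefix_def)
    have "length (h (A n)) = Suc n" "length (h (A (Suc n))) = Suc (Suc n)"
      using hl T1 by (simp_all add: A_def)
    then have "length zs = 1" using zs by simp
    then obtain z where "zs = [z]" by (metis One_nat_def length_0_conv length_Suc_conv)
    then show ?case using YS[of "Suc n"] IH zs \<open>length (h (A n)) = Suc n\<close>
      by (simp add: nth_append)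
  qed
  have nilT: "[] \<in> T" using tr unfolding is_tree_def by (metis Nil_prefix ex_in_conv)
  have "length (h []) = 0" using hl nilT by simp
  then have "lU [] = lT []" using hom nilT by (simp add: labeled_tree_hom_def) (metis)
  moreover have "player_I_wins_play T lT U lU xs ys"
    using ws unfolding winning_strategy_I_def xs_def by blast
  ultimately obtain n where n1: "\<forall>m\<le>n. A m \<in> T"
    and n2: "\<not> (map ys [0..<Suc n] \<in> U \<and> lU (map ys [0..<Suc n]) = lT (A n))"
    unfolding player_I_wins_play_def A_def by blast
  have "map ys [0..<Suc n] = h (A n)" using key[OF n1] my[of "Suc n"] by (simp del: upt_Suc)
  moreover have "A n \<in> T" using n1 by simp
  ultimately show False using n2 hom by (simp add: labeled_tree_hom_def)
qed

theorem lemma2p4: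
  fixes T :: "'x list set" and U :: "'y list set"
    and lT :: "'x list \<Rightarrow> 'l" and lU :: "'y list \<Rightarrow> 'l"
  assumes "is_tree T" and "is_tree U"
  shows "(\<not> (\<exists>h. labeled_tree_hom T lT U lU h)) \<longleftrightarrow>
         (\<exists>\<Sigma>. winning_strategy_I T lT U lU \<Sigma>)"
proof
  assume "\<not> (\<exists>h. labeled_tree_hom T lT U lU h)"
  then have "lose T lT U lU [] []" using hom_exists[OF assms(1)] by blast
  then obtain \<sigma> where w: "wins_from T lT U lU [] [] \<sigma>" using lose_wins by blast
  have nilU: "[] \<in> U" using assms(2) unfolding is_tree_def by (metis Nil_prefix ex_in_conv)
  have "winning_strategy_I T lT U lU \<sigma>"
    using w nilU unfolding winning_strategy_I_def player_I_wins_play_def wins_from_def by auto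
  then show "\<exists>\<Sigma>. winning_strategy_I T lT U lU \<Sigma>" by blast
next
  assume "\<exists>\<Sigma>. winning_strategy_I T lT U lU \<Sigma>"
  then show "\<not> (\<exists>h. labeled_tree_hom T lT U lU h)" using no_hom[OF assms(1)] by blast
qed

end
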